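(* Let $E$ be an arbitrary directed graph, let $c$ be a cycle without exits in $E$, and let $H=\overline{c^0}$ be the saturated closure of the set $c^0$ of vertices of $c$. The following are equivalent: (i) $|F_E(c^0)|<\infty$; (ii) $H$ satisfies Condition (F) and $B_H=\emptyset$.
   Context: Let $E=(E^0,E^1,r,s)$ be a directed graph. A vertex $v$ is an infinite emitter if $s^{-1}(v)$ is infinite ($\mathrm{Inf}(E)$ is the set of them) and regular if $0<|s^{-1}(v)|<\infty$. Paths $\mu=\mu_1\cdots\mu_n$ ($r(\mu_i)=s(\mu_{i+1})$), $s(\mu)=s(\mu_1)$, $r(\mu)=r(\mu_n)$, $|\mu|=n$; vertices are paths of length $0$; $\mathrm{Path}(E)$ is the set of finite paths. A cycle is a path $c=e_1\cdots e_n$, $n\ge1$, with $r(e_n)=s(e_1)$ and $s(e_i)\neq s(e_j)$ for $i\ne j$; $c^0$ denotes its set of vertices. An exit of $c$ is an edge $e$ with $s(e)=s(e_i)$ for some $i$ and $e\neq e_i$; $c$ is without exits if it has none. $H\subseteq E^0$ is hereditary if $v\in H$ and a path from $v$ to $w$ imply $w\in H$; saturated if every regular $v$ with $r(s^{-1}(v))\subseteq H$ lies in $H$. The saturated closure $\overline{Y}$ of a hereditary set $Y$ is the smallest hereditary saturated set containing $Y$. For $Y\subseteq E^0$, $F_E(Y)$ is the set of paths $\alpha$ of length $\ge1$ with $s(\alpha_1)\notin Y$, $r(\alpha_i)\notin Y$ for $i<|\alpha|$, $r(\alpha_{|\alpha|})\in Y$. For hereditary saturated $H$, $B_H=\{v\in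 E^0\setminus H: v\in\mathrm{Inf}(E),\ 0<|s^{-1}(v)\cap r^{-1}(E^0\setminus H)|<\infty\}$ and $F'_E(H)=\{\alpha\in F_E(H): s(\alpha_{|\alpha|})\notin B_H\}$. $H$ satisfies Condition (F) if $H\cup F'_E(H)\cup\{\alpha\in\mathrm{Path}(E): r(\alpha)\in B_H\}$ is a finite set. *)

theory Defs
  imports Main
begin

record ('v, 'e) dgraph =
  verts :: "'v set"
  edges :: "'e set"
  rng :: "'e \<Rightarrow> 'v"
  src :: "'e \<Rightarrow> 'v"

definition wf_graph :: "('v, 'e) dgraph \<Rightarrow> bool" where
  "wf_graph E \<longleftrightarrow> (\<forall>e\<in>edges E. src E e \<in> verts E \<and> rng E e \<in> verts E)"

definition src_inv :: "('v, 'e) dgraph \<Rightarrow> 'v \<Rightarrow> 'e set" where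
  "src_inv E v = {e \<in> edges E. src E e = v}"

definition Inf_emitters :: "('v, 'e) dgraph \<Rightarrow> 'v set" where
  "Inf_emitters E = {v \<in> verts E. infinite (src_inv E v)}"

definition regular :: "('v, 'e) dgraph \<Rightarrow> 'v \<Rightarrow> bool" where
  "regular E v \<longleftrightarrow> src_inv E v \<noteq> {} \<and> finite (src_inv E v)"

definition epath :: "('v, 'e) dgraph \<Rightarrow> 'e list \<Rightarrow> bool" where
  "epath E \<alpha> \<longleftrightarrow> \<alpha> \<noteq> [] \<and> set \<alpha> \<subseteq> edges E \<and>
     (\<forall>i. Suc i < length \<alpha> \<longrightarrow> rng E (\<alpha> ! i) = src E (\<alpha> ! Suc i))"

text \<open>All finite paths: a path is a pair (source, edge list); vertices are (v, []).\<close>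
definition Path :: "('v, 'e) dgraph \<Rightarrow> ('v \<times> 'e list) set" where
  "Path E = {(v, []) | v. v \<in> verts E} \<union> {(src E (hd \<alpha>), \<alpha>) | \<alpha>. epath E \<alpha>}"

definition prange :: "('v, 'e) dgraph \<Rightarrow> ('v \<times> 'e list) \<Rightarrow> 'v" where
  "prange E p = (if snd p = [] then fst p else rng E (last (snd p)))"

definition is_cycle :: "('v, 'e) dgraph \<Rightarrow> 'e list \<Rightarrow> bool" where
  "is_cycle E c \<longleftrightarrow> epath E c \<and> rng E (last c) = src E (hd c) \<and>
     (\<forall>i j. i < length c \<longrightarrow> j < length c \<longrightarrow> i \<noteq> j \<longrightarrow> src E (c ! i) \<noteq> src E (c ! j))"

definition cycle_verts :: "('v, 'e) dgraph \<Rightarrow> 'e list \<Rightarrow> 'v set" where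
  "cycle_verts E c = src E ` set c"

definition is_exit :: "('v, 'e) dgraph \<Rightarrow> 'e list \<Rightarrow> 'e \<Rightarrow> bool" where
  "is_exit E c e \<longleftrightarrow> e \<in> edges E \<and> (\<exists>i < length c. src E e = src E (c ! i) \<and> e \<noteq> c ! i)"

definition no_exits :: "('v, 'e) dgraph \<Rightarrow> 'e list \<Rightarrow> bool" where
  "no_exits E c \<longleftrightarrow> (\<forall>e. \<not> is_exit E c e)"

definition hereditary :: "('v, 'e) dgraph \<Rightarrow> 'v set \<Rightarrow> bool" where
  "hereditary E H \<longleftrightarrow> (\<forall>p \<in> Path E. fst p \<in> H \<longrightarrow> prange E p \<in> H)"

definition saturated :: "('v, 'e) dgraph \<Rightarrow> 'v set \<Rightarrow> bool" where
  "saturated E H \<longleftrightarrow> (\<forall>v \<in> verts E. regular E v \<and> rng E ` src_inv E v \<subseteq> H \<longrightarrow> v \<in> H)"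

definition sat_closure :: "('v, 'e) dgraph \<Rightarrow> 'v set \<Rightarrow> 'v set" where
  "sat_closure E Y = \<Inter>{H. H \<subseteq> verts E \<and> Y \<subseteq> H \<and> hereditary E H \<and> saturated E H}"

definition F_E :: "('v, 'e) dgraph \<Rightarrow> 'v set \<Rightarrow> 'e list set" where
  "F_E E Y = {\<alpha>. epath E \<alpha> \<and> src E (hd \<alpha>) \<notin> Y \<and>
      (\<forall>i. Suc i < length \<alpha> \<longrightarrow> rng E (\<alpha> ! i) \<notin> Y) \<and> rng E (last \<alpha>) \<in> Y}"

definition B_H :: "('v, 'e) dgraph \<Rightarrow> 'v set \<Rightarrow> 'v set" where
  "B_H E H = {v \<in> verts E - H. v \<in> Inf_emitters E \<and>
      finite {e \<in> src_inv E v. rng E e \<notin> H} \<and> card {e \<in> src_inv E v. rng E e \<notin> H} > 0}"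

definition F'_E :: "('v, 'e) dgraph \<Rightarrow> 'v set \<Rightarrow> 'e list set" where
  "F'_E E H = {\<alpha> \<in> F_E E H. src E (last \<alpha>) \<notin> B_H E H}"

definition condition_F :: "('v, 'e) dgraph \<Rightarrow> 'v set \<Rightarrow> bool" where
  "condition_F E H \<longleftrightarrow> finite ({(v, []) | v. v \<in> H} \<union> {(src E (hd \<alpha>), \<alpha>) | \<alpha>. \<alpha> \<in> F'_E E H}
      \<union> {p \<in> Path E. prange E p \<in> B_H E H})"

end

theory Submission
  imports Defs
begin

lemma epath_Cons: "epath E (e#\<alpha>) \<longleftrightarrow> e \<in> edges E \<and> (\<alpha> \<noteq> [] \<longrightarrow> epath E \<alpha> \<and> rng E e = src E (hd \<alpha>))"
proof
  assume h: "epath E (e#\<alpha>)"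
  show "e \<in> edges E \<and> (\<alpha> \<noteq> [] \<longrightarrow> epath E \<alpha> \<and> rng E e = src E (hd \<alpha>))"
  proof (intro conjI impI)
    show "e \<in> edges E" using h by (auto simp: epath_def)
    assume ne: "\<alpha> \<noteq> []"
    show "epath E \<alpha>" unfolding epath_def
    proof (intro conjI allI impI)
      show "\<alpha> \<noteq> []" by fact
      show "set \<alpha> \<subseteq> edges E" using h by (auto simp: epath_def)
      fix i assume "Suc i < length \<alpha>"
      then show "rng E (\<alpha> ! i) = src E (\<alpha> ! Suc i)"
        using h unfolding epath_def by (metis Suc_less_eq length_Cons nth_Cons_Suc)
    qed
    show "rng E e = src E (hd \<alpha>)" using h ne unfolding epath_def
      by (metis hd_conv_nth length_Cons length_greater_0_conv nth_Cons_0 nth_Cons_Suc zero_less_Suc Suc_less_eq)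
  qed
next
  assume h: "e \<in> edges E \<and> (\<alpha> \<noteq> [] \<longrightarrow> epath E \<alpha> \<and> rng E e = src E (hd \<alpha>))"
  show "epath E (e#\<alpha>)" unfolding epath_def
  proof (intro conjI allI impI)
    show "e # \<alpha> \<noteq> []" by simp
    show "set (e # \<alpha>) \<subseteq> edges E" using h by (cases "\<alpha> = []") (auto simp: epath_def)
    fix i assume i: "Suc i < length (e # \<alpha>)"
    show "rng E ((e # \<alpha>) ! i) = src E ((e # \<alpha>) ! Suc i)"
    proof (cases i)
      case 0 then show ?thesis using h i by (auto simp: hd_conv_nth)
    next
      case (Suc j) then show ?thesis using h i by (auto simp: epath_def)
    qed
  qed
qed

lemma epath_append: "epath E \<alpha> \<Longrightarrow> epath E \<beta> \<Longrightarrow> rng E (last \<alpha>) = src E (hd \<beta>) \<Longrightarrow> epath E (\<alpha>@\<beta>)"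
proof (induction \<alpha>)
  case Nil then show ?case by (simp add: epath_def)
next
  case (Cons e \<alpha>)
  then show ?case
    by (cases "\<alpha> = []") (auto simp: epath_Cons)
qed

lemma F_E_alt: "\<alpha> \<in> F_E E Y \<longleftrightarrow> epath E \<alpha> \<and> (\<forall>e\<in>set \<alpha>. src E e \<notin> Y) \<and> rng E (last \<alpha>) \<in> Y"
proof
  assume h: "\<alpha> \<in> F_E E Y"
  have "\<forall>e\<in>set \<alpha>. src E e \<notin> Y"
  proof
    fix e assume "e \<in> set \<alpha>"
    then obtain j where j: "j < length \<alpha>" "e = \<alpha> ! j" by (metis in_set_conv_nth)
    show "src E e \<notin> Y"
    proof (cases j)
      case 0 then show ?thesis using h j by (auto simp: F_E_def epath_def hd_conv_nth)
    next
      case (Suc i)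
      then have si: "Suc i < length \<alpha>" using j by simp
      then have "src E (\<alpha> ! Suc i) = rng E (\<alpha> ! i)" "rng E (\<alpha> ! i) \<notin> Y"
        using h by (auto simp: F_E_def epath_def)
      then show ?thesis using j Suc by simp
    qed
  qed
  then show "epath E \<alpha> \<and> (\<forall>e\<in>set \<alpha>. src E e \<notin> Y) \<and> rng E (last \<alpha>) \<in> Y"
    using h by (auto simp: F_E_def)
next
  assume h: "epath E \<alpha> \<and> (\<forall>e\<in>set \<alpha>. src E e \<notin> Y) \<and> rng E (last \<alpha>) \<in> Y"
  then have ne: "\<alpha> \<noteq> []" by (simp add: epath_def)
  show "\<alpha> \<in> F_E E Y" unfolding F_E_def
  proof (intro CollectI conjI allI impI)
    show "epath E \<alpha>" using h by simp
    show "src E (hd \<alpha>) \<notin> Y" using h ne by simp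
    show "rng E (last \<alpha>) \<in> Y" using h by simp
    fix i assume i: "Suc i < length \<alpha>"
    then have "rng E (\<alpha> ! i) = src E (\<alpha> ! Suc i)" using h by (simp add: epath_def)
    moreover have "\<alpha> ! Suc i \<in> set \<alpha>" using i by simp
    ultimately show "rng E (\<alpha> ! i) \<notin> Y" using h by simp
  qed
qed

lemma F_E_nonempty: "\<alpha> \<in> F_E E Y \<Longrightarrow> \<alpha> \<noteq> []"
  by (simp add: F_E_def epath_def)

lemma F_E_Cons: "e#\<delta> \<in> F_E E Y \<longleftrightarrow> e \<in> edges E \<and> src E e \<notin> Y \<and>
   (if \<delta> = [] then rng E e \<in> Y else \<delta> \<in> F_E E Y \<and> rng E e = src E (hd \<delta>))"
  by (cases "\<delta> = []") (auto simp: F_E_alt epath_Cons)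

lemma F_E_append: "\<alpha> \<in> F_E E H \<Longrightarrow> C \<subseteq> H \<Longrightarrow> \<delta> \<in> F_E E C \<Longrightarrow> rng E (last \<alpha>) = src E (hd \<delta>)
  \<Longrightarrow> \<alpha> @ \<delta> \<in> F_E E C"
proof -
  assume a: "\<alpha> \<in> F_E E H" "C \<subseteq> H" "\<delta> \<in> F_E E C" "rng E (last \<alpha>) = src E (hd \<delta>)"
  have "epath E \<alpha>" "epath E \<delta>" using a by (simp_all add: F_E_alt)
  then have ep: "epath E (\<alpha>@\<delta>)" using epath_append a(4) by blast
  have "\<forall>e\<in>set (\<alpha>@\<delta>). src E e \<notin> C" using a unfolding F_E_alt by auto
  moreover have "last (\<alpha>@\<delta>) = last \<delta>" using F_E_nonempty[OF a(3)] by simp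
  ultimately show ?thesis using ep a(3) unfolding F_E_alt by simp
qed

lemma closed_path: "(\<forall>e\<in>edges E. src E e \<in> S \<longrightarrow> rng E e \<in> S) \<Longrightarrow> epath E \<alpha> \<Longrightarrow> src E (hd \<alpha>) \<in> S
   \<Longrightarrow> rng E (last \<alpha>) \<in> S"
proof (induction \<alpha>)
  case Nil then show ?case by (simp add: epath_def)
next
  case (Cons e \<alpha>)
  then show ?case by (cases "\<alpha> = []") (auto simp: epath_Cons)
qed

lemma closed_hereditary: "(\<forall>e\<in>edges E. src E e \<in> S \<longrightarrow> rng E e \<in> S) \<Longrightarrow> hereditary E S"
proof -
  assume cl: "\<forall>e\<in>edges E. src E e \<in> S \<longrightarrow> rng E e \<in> S"
  show ?thesis unfolding hereditary_def
  proof
    fix p assume "p \<in> Path E"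
    then consider v where "p = (v, [])" | \<alpha> where "p = (src E (hd \<alpha>), \<alpha>)" "epath E \<alpha>"
      unfolding Path_def by blast
    then show "fst p \<in> S \<longrightarrow> prange E p \<in> S"
    proof cases
      case 1 then show ?thesis by (simp add: prange_def)
    next
      case 2
      then have "\<alpha> \<noteq> []" by (simp add: epath_def)
      then show ?thesis using 2 closed_path[OF cl] by (simp add: prange_def)
    qed
  qed
qed

lemma closure_le: "S \<subseteq> verts E \<Longrightarrow> Y \<subseteq> S \<Longrightarrow> hereditary E S \<Longrightarrow> saturated E S \<Longrightarrow> sat_closure E Y \<subseteq> S"
  unfolding sat_closure_def by blast

lemma closure_ge: "Y \<subseteq> sat_closure E Y"
  unfolding sat_closure_def by blast


lemma F_split: "\<gamma> \<in> F_E E C \<Longrightarrow> C \<subseteq> H \<Longrightarrow> src E (hd \<gamma>) \<notin> H \<Longrightarrow>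
  \<exists>\<alpha> \<delta>. \<gamma> = \<alpha>@\<delta> \<and> \<alpha> \<in> F_E E H \<and> (\<delta> = [] \<or> \<delta> \<in> F_E E C \<and> src E (hd \<delta>) = rng E (last \<alpha>))"
proof (induction \<gamma>)
  case Nil then show ?case using F_E_nonempty by blast
next
  case (Cons e \<gamma>')
  show ?case
  proof (cases "\<gamma>' = []")
    case True
    then have "[e] \<in> F_E E H" using Cons.prems by (auto simp: F_E_Cons)
    then show ?thesis using True by auto
  next
    case False
    then have g': "\<gamma>' \<in> F_E E C" "rng E e = src E (hd \<gamma>')" "e \<in> edges E"
      using Cons.prems(1) by (auto simp: F_E_Cons)
    show ?thesis
    proof (cases "rng E e \<in> H")
      case True
      then have "[e] \<in> F_E E H" using Cons.prems g' by (auto simp: F_E_Cons)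
      then show ?thesis using g' by (intro exI[of _ "[e]"] exI[of _ "\<gamma>'"]) auto
    next
      case f2: False
      then obtain \<alpha>' \<delta>' where ad: "\<gamma>' = \<alpha>'@\<delta>'" "\<alpha>' \<in> F_E E H"
        "\<delta>' = [] \<or> \<delta>' \<in> F_E E C \<and> src E (hd \<delta>') = rng E (last \<alpha>')"
        using Cons.IH[OF g'(1) Cons.prems(2)] g'(2) by auto
      have ne: "\<alpha>' \<noteq> []" using F_E_nonempty ad(2) .
      have "e#\<alpha>' \<in> F_E E H" using Cons.prems g' ad ne by (auto simp: F_E_Cons)
      then show ?thesis using ad ne by (intro exI[of _ "e#\<alpha>'"] exI[of _ "\<delta>'"]) auto
    qed
  qed
qed

theorem lemma2p5:
  fixes E :: "('v, 'e) dgraph" and c :: "'e list"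
  assumes "wf_graph E"
    and "is_cycle E c"
    and "no_exits E c"
  shows "finite (F_E E (cycle_verts E c)) \<longleftrightarrow>
    (condition_F E (sat_closure E (cycle_verts E c)) \<and>
     B_H E (sat_closure E (cycle_verts E c)) = {})"
proof -
  note wf = assms(1)
  define C where "C = cycle_verts E c"
  define H where "H = sat_closure E C"
  define P where "P w = {\<gamma> \<in> F_E E C. src E (hd \<gamma>) = w}" for w
  define G where "G w \<longleftrightarrow> w \<in> C \<or> P w \<noteq> {}" for w
  have cne: "c \<noteq> []" using assms(2) by (simp add: is_cycle_def epath_def)
  have cedges: "set c \<subseteq> edges E" using assms(2) by (simp add: is_cycle_def epath_def)
  have wfe: "\<And>e. e \<in> edges E \<Longrightarrow> src E e \<in> verts E \<and> rng E e \<in> verts E"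
    using wf by (simp add: wf_graph_def)
  have C_verts: "C \<subseteq> verts E" using cedges wfe by (auto simp: C_def cycle_verts_def)
  have C_fin: "finite C" by (simp add: C_def cycle_verts_def)
  have C_closed: "\<forall>e\<in>edges E. src E e \<in> C \<longrightarrow> rng E e \<in> C"
  proof (intro ballI impI)
    fix e assume e: "e \<in> edges E" "src E e \<in> C"
    then obtain i where i: "i < length c" "src E e = src E (c ! i)"
      by (auto simp: C_def cycle_verts_def in_set_conv_nth)
    have "e = c ! i" using assms(3) e i unfolding no_exits_def is_exit_def by blast
    show "rng E e \<in> C"
    proof (cases "Suc i < length c")
      case True
      then have "rng E (c ! i) = src E (c ! Suc i)" using assms(2) by (simp add: is_cycle_def epath_def)
      then show ?thesis using True \<open>e = c ! i\<close> by (auto simp: C_def cycle_verts_def)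
    next
      case False
      then have "i = length c - 1" using i(1) by simp
      then have "c ! i = last c" using cne by (simp add: last_conv_nth)
      moreover have "rng E (last c) = src E (hd c)" using assms(2) by (simp add: is_cycle_def)
      ultimately show ?thesis using cne \<open>e = c ! i\<close> by (auto simp: C_def cycle_verts_def)
    qed
  qed
  have C_H: "C \<subseteq> H" unfolding H_def by (rule closure_ge)
  have P_C: "\<And>w. w \<in> C \<Longrightarrow> P w = {}"
    unfolding P_def using F_E_nonempty by (fastforce simp: F_E_alt)
  have P_Cons: "\<And>e \<delta>. e \<in> edges E \<Longrightarrow> src E e \<notin> C \<Longrightarrow> \<delta> \<in> P (rng E e) \<Longrightarrow> e#\<delta> \<in> P (src E e)"
    unfolding P_def using F_E_nonempty by (auto simp: F_E_Cons)
  have P_single: "\<And>e. e \<in> edges E \<Longrightarrow> src E e \<notin> C \<Longrightarrow> rng E e \<in> C \<Longrightarrow> [e] \<in> P (src E e)"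
    unfolding P_def by (auto simp: F_E_Cons)
  define X1 where "X1 = {w \<in> verts E. finite (P w)}"
  have X1_closed: "\<forall>e\<in>edges E. src E e \<in> X1 \<longrightarrow> rng E e \<in> X1"
  proof (intro ballI impI)
    fix e assume e: "e \<in> edges E" "src E e \<in> X1"
    have "finite (P (rng E e))"
    proof (cases "rng E e \<in> C \<or> src E e \<in> C")
      case True then show ?thesis using C_closed e P_C by auto
    next
      case False
      then have "Cons e ` P (rng E e) \<subseteq> P (src E e)" using P_Cons e by auto
      then have "finite (Cons e ` P (rng E e))" using e by (auto simp: X1_def intro: finite_subset)
      then show ?thesis by (rule finite_imageD) (simp add: inj_on_def)
    qed
    then show "rng E e \<in> X1" using wfe e by (simp add: X1_def)
  qed
  have X1_sat: "saturated E X1" unfolding saturated_def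
  proof (intro ballI impI)
    fix v assume v: "v \<in> verts E" "regular E v \<and> rng E ` src_inv E v \<subseteq> X1"
    have "P v \<subseteq> (\<lambda>e. [e]) ` src_inv E v \<union> (\<Union>e\<in>src_inv E v. Cons e ` P (rng E e))"
    proof
      fix \<gamma> assume g: "\<gamma> \<in> P v"
      have "\<gamma> \<noteq> []" using g F_E_nonempty by (auto simp: P_def)
      then obtain e \<delta> where ed: "\<gamma> = e#\<delta>" by (cases \<gamma>) auto
      then have es: "e \<in> src_inv E v" using g by (auto simp: P_def F_E_Cons src_inv_def)
      show "\<gamma> \<in> (\<lambda>e. [e]) ` src_inv E v \<union> (\<Union>e\<in>src_inv E v. Cons e ` P (rng E e))"
      proof (cases "\<delta> = []")
        case True then show ?thesis using ed es by auto
      next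
        case False
        then have "\<delta> \<in> P (rng E e)" using g ed by (auto simp: P_def F_E_Cons)
        then show ?thesis using ed es by auto
      qed
    qed
    moreover have "finite (src_inv E v)" using v by (simp add: regular_def)
    moreover have "\<forall>e\<in>src_inv E v. finite (P (rng E e))" using v by (auto simp: X1_def)
    ultimately have "finite (P v)" by (meson finite_UN_I finite_Un finite_imageI finite_subset)
    then show "v \<in> X1" using v by (simp add: X1_def)
  qed
  have H_X1: "H \<subseteq> X1" unfolding H_def
    by (rule closure_le) (use X1_closed X1_sat P_C C_verts in \<open>auto simp: X1_def intro: closed_hereditary\<close>)
  define X2 where "X2 = {w \<in> verts E. G w \<and> (\<forall>\<alpha>. epath E \<alpha> \<and> src E (hd \<alpha>) = w \<longrightarrow> G (rng E (last \<alpha>)))}"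
  have X2_closed: "\<forall>e\<in>edges E. src E e \<in> X2 \<longrightarrow> rng E e \<in> X2"
  proof (intro ballI impI)
    fix e assume e: "e \<in> edges E" "src E e \<in> X2"
    have "epath E [e]" using e by (simp add: epath_Cons)
    then have "G (rng E e)" using e by (auto simp: X2_def)
    moreover have "G (rng E (last \<beta>))" if "epath E \<beta>" "src E (hd \<beta>) = rng E e" for \<beta>
    proof -
      have ne: "\<beta> \<noteq> []" using that by (simp add: epath_def)
      then have "epath E (e#\<beta>)" using that e by (simp add: epath_Cons)
      then show ?thesis using e ne by (auto simp: X2_def)
    qed
    ultimately show "rng E e \<in> X2" using wfe e by (simp add: X2_def)
  qed
  have C_X2: "C \<subseteq> X2"
    using C_verts closed_path[OF C_closed] by (auto simp: X2_def G_def)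
  have X2_sat: "saturated E X2" unfolding saturated_def
  proof (intro ballI impI)
    fix v assume v: "v \<in> verts E" "regular E v \<and> rng E ` src_inv E v \<subseteq> X2"
    obtain e where e: "e \<in> src_inv E v" using v by (auto simp: regular_def)
    have ee: "e \<in> edges E" "src E e = v" using e by (auto simp: src_inv_def)
    have Gr: "G (rng E e)" using e v by (auto simp: X2_def)
    have Gv: "G v"
    proof (cases "v \<in> C")
      case True then show ?thesis by (simp add: G_def)
    next
      case False
      show ?thesis
      proof (cases "rng E e \<in> C")
        case True then show ?thesis using P_single[OF ee(1)] ee False by (auto simp: G_def)
      next
        case f2: False
        then obtain \<delta> where "\<delta> \<in> P (rng E e)" using Gr by (auto simp: G_def)
        then show ?thesis using P_Cons[OF ee(1)] ee False by (auto simp: G_def)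
      qed
    qed
    moreover have "G (rng E (last \<alpha>))" if "epath E \<alpha>" "src E (hd \<alpha>) = v" for \<alpha>
    proof -
      have "\<alpha> \<noteq> []" using that(1) by (simp add: epath_def)
      then obtain f \<beta> where fb: "\<alpha> = f#\<beta>" by (cases \<alpha>) auto
      then have f: "f \<in> src_inv E v" using that by (auto simp: epath_Cons src_inv_def)
      then have fX: "rng E f \<in> X2" using v by auto
      show ?thesis
      proof (cases "\<beta> = []")
        case True then show ?thesis using fb fX by (simp add: X2_def)
      next
        case False
        then have "epath E \<beta>" "src E (hd \<beta>) = rng E f" using that fb by (auto simp: epath_Cons)
        then show ?thesis using fX fb False by (auto simp: X2_def)
      qed
    qed
    ultimately show "v \<in> X2" using v by (simp add: X2_def)
  qed
  have H_X2: "H \<subseteq> X2" unfolding H_def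
    by (rule closure_le) (use X2_closed X2_sat C_X2 in \<open>auto simp: X2_def intro: closed_hereditary\<close>)
  have HG: "\<And>w. w \<in> H \<Longrightarrow> G w" using H_X2 by (auto simp: X2_def)
  have HP: "\<And>w. w \<in> H \<Longrightarrow> finite (P w)" using H_X1 by (auto simp: X1_def)
  have CF: "condition_F E H \<longleftrightarrow> finite H \<and> finite (F'_E E H) \<and> finite {p \<in> Path E. prange E p \<in> B_H E H}"
  proof -
    have A: "{(v, []) | v. v \<in> H} = (\<lambda>v. (v, [])) ` H" by auto
    have B: "{(src E (hd \<alpha>), \<alpha>) | \<alpha>. \<alpha> \<in> F'_E E H} = (\<lambda>\<alpha>. (src E (hd \<alpha>), \<alpha>)) ` F'_E E H" by auto
    have fA: "finite ((\<lambda>v. (v, [])) ` H) \<longleftrightarrow> finite H" by (rule finite_image_iff) (simp add: inj_on_def)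
    have fB: "finite ((\<lambda>\<alpha>. (src E (hd \<alpha>), \<alpha>)) ` F'_E E H) \<longleftrightarrow> finite (F'_E E H)"
      by (rule finite_image_iff) (simp add: inj_on_def)
    show ?thesis by (simp only: condition_F_def A B finite_Un fA fB conj_assoc)
  qed
  show ?thesis
    unfolding C_def[symmetric] H_def[symmetric]
  proof
    assume fin: "finite (F_E E C)"
    have H_fin: "finite H"
    proof -
      have "H \<subseteq> C \<union> (\<lambda>\<gamma>. src E (hd \<gamma>)) ` F_E E C"
        using HG by (auto simp: G_def P_def)
      then show ?thesis using C_fin fin by (meson finite_Un finite_imageI finite_subset)
    qed
    have B_empty: "B_H E H = {}"
    proof (rule ccontr)
      assume "B_H E H \<noteq> {}"
      then obtain v where v: "v \<in> verts E" "v \<notin> H" "infinite (src_inv E v)"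
        "finite {e \<in> src_inv E v. rng E e \<notin> H}"
        by (auto simp: B_H_def Inf_emitters_def)
      define S' where "S' = {e \<in> src_inv E v. rng E e \<in> H}"
      have "src_inv E v = S' \<union> {e \<in> src_inv E v. rng E e \<notin> H}" by (auto simp: S'_def)
      then have infS: "infinite S'" using v by (metis finite_Un)
      define f where "f e = (if rng E e \<in> C then [e] else e # (SOME \<delta>. \<delta> \<in> P (rng E e)))" for e
      have vC: "v \<notin> C" using v C_H by auto
      have "f ` S' \<subseteq> F_E E C"
      proof
        fix \<gamma> assume "\<gamma> \<in> f ` S'"
        then obtain e where e: "e \<in> S'" "\<gamma> = f e" by auto
        have ee: "e \<in> edges E" "src E e = v" "rng E e \<in> H" using e by (auto simp: S'_def src_inv_def)
        show "\<gamma> \<in> F_E E C"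
        proof (cases "rng E e \<in> C")
          case True then show ?thesis using P_single[OF ee(1)] ee vC e by (auto simp: f_def P_def)
        next
          case False
          then have "P (rng E e) \<noteq> {}" using HG[OF ee(3)] by (simp add: G_def)
          then have "(SOME \<delta>. \<delta> \<in> P (rng E e)) \<in> P (rng E e)" by (simp add: some_in_eq)
          then show ?thesis using P_Cons[OF ee(1)] ee vC e False by (auto simp: f_def P_def)
        qed
      qed
      moreover have "inj_on f S'"
        by (rule inj_on_inverseI[of _ hd]) (simp add: f_def)
      ultimately have "finite S'" using fin by (meson finite_imageD finite_subset)
      then show False using infS by simp
    qed
    have FH_fin: "finite (F_E E H)"
    proof -
      have "F_E E H \<subseteq> (\<Union>\<gamma>\<in>F_E E C. (\<lambda>k. take k \<gamma>) ` {..length \<gamma>})"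
      proof
        fix \<alpha> assume a: "\<alpha> \<in> F_E E H"
        have wH: "rng E (last \<alpha>) \<in> H" using a by (simp add: F_E_alt)
        show "\<alpha> \<in> (\<Union>\<gamma>\<in>F_E E C. (\<lambda>k. take k \<gamma>) ` {..length \<gamma>})"
        proof (cases "rng E (last \<alpha>) \<in> C")
          case True
          then have "\<alpha> \<in> F_E E C" using a C_H by (auto simp: F_E_alt)
          then show ?thesis by (intro UN_I[of \<alpha>]) (auto intro: image_eqI[of _ _ "length \<alpha>"])
        next
          case False
          then obtain \<delta> where d: "\<delta> \<in> P (rng E (last \<alpha>))" using HG[OF wH] by (auto simp: G_def)
          then have "\<alpha>@\<delta> \<in> F_E E C" using F_E_append[OF a C_H] by (auto simp: P_def)
          then show ?thesis by (intro UN_I[of "\<alpha>@\<delta>"]) (auto intro: image_eqI[of _ _ "length \<alpha>"])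
        qed
      qed
      then show ?thesis by (rule finite_subset) (use fin in auto)
    qed
    have "F'_E E H \<subseteq> F_E E H" by (auto simp: F'_E_def)
    then show "condition_F E H \<and> B_H E H = {}"
      using CF H_fin FH_fin B_empty finite_subset by auto
  next
    assume a: "condition_F E H \<and> B_H E H = {}"
    then have H_fin: "finite H" and FH_fin: "finite (F_E E H)"
      using CF by (auto simp: F'_E_def)
    have "F_E E C \<subseteq> (\<Union>w\<in>H. P w) \<union> (\<Union>\<alpha>\<in>F_E E H. insert \<alpha> ((@) \<alpha> ` P (rng E (last \<alpha>))))"
    proof
      fix \<gamma> assume g: "\<gamma> \<in> F_E E C"
      show "\<gamma> \<in> (\<Union>w\<in>H. P w) \<union> (\<Union>\<alpha>\<in>F_E E H. insert \<alpha> ((@) \<alpha> ` P (rng E (last \<alpha>))))"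
      proof (cases "src E (hd \<gamma>) \<in> H")
        case True then show ?thesis using g by (auto simp: P_def)
      next
        case False
        then obtain \<alpha> \<delta> where ad: "\<gamma> = \<alpha>@\<delta>" "\<alpha> \<in> F_E E H"
          "\<delta> = [] \<or> \<delta> \<in> F_E E C \<and> src E (hd \<delta>) = rng E (last \<alpha>)"
          using F_split[OF g C_H] by blast
        then show ?thesis by (auto simp: P_def)
      qed
    qed
    moreover have "finite (\<Union>w\<in>H. P w)" using H_fin HP by auto
    moreover have "finite (\<Union>\<alpha>\<in>F_E E H. insert \<alpha> ((@) \<alpha> ` P (rng E (last \<alpha>))))"
      using FH_fin HP by (auto simp: F_E_alt)
    ultimately show "finite (F_E E C)" by (meson finite_Un finite_subset)
  qed
qed

end
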